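(* The sign function is not definable in $Q_0$: there is no $\Sigma_m$-term $t(x)$ with only variable $x$ such that $t(q)=\mathrm{sign}(q)$ for all rationals $q$ (evaluated in $Q_0$), where $\mathrm{sign}(q)=-1$ if $q<0$, $0$ if $q=0$, $1$ if $q>0$.
   Context: $\Sigma_m=(0,1,+,\cdot,-,{}^{-1})$. $Q_0$ is the field of rational numbers with its usual $0,1,+,\cdot,-$ and with the total inverse $q^{-1}=1/q$ for $q\neq 0$ and $0^{-1}=0$. *)

theory Defs
  imports Complex_Main
begin

datatype tm = Var | Zero | One | Plus tm tm | Times tm tm | Neg tm | Inv tm

text \<open>Evaluation in Q_0: the rationals with total inverse (inverse 0 = 0 in Isabelle).\<close>
fun eval_Q0 :: "tm \<Rightarrow> rat \<Rightarrow> rat" where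
  "eval_Q0 Var q = q"
| "eval_Q0 Zero q = 0"
| "eval_Q0 One q = 1"
| "eval_Q0 (Plus s t) q = eval_Q0 s q + eval_Q0 t q"
| "eval_Q0 (Times s t) q = eval_Q0 s q * eval_Q0 t q"
| "eval_Q0 (Neg t) q = - eval_Q0 t q"
| "eval_Q0 (Inv t) q = inverse (eval_Q0 t q)"

lemma inverse_zero_rat: "inverse (0::rat) = 0" by simp

end

theory Submission
  imports Defs "HOL-Computational_Algebra.Polynomial"
begin

lemma roots_bounded:
  fixes p :: "rat poly"
  assumes "p \<noteq> 0"
  shows "\<exists>M. \<forall>q. M < \<bar>q\<bar> \<longrightarrow> poly p q \<noteq> 0"
proof -
  let ?S = "{x. poly p x = 0}"
  have fin: "finite ?S" using poly_roots_finite[OF assms] .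
  have "\<forall>x\<in>?S. \<bar>x\<bar> \<le> (\<Sum>y\<in>?S. \<bar>y\<bar>)"
    using member_le_sum[OF _ _ fin, of _ abs] by auto
  thus ?thesis by (metis (mono_tags, lifting) mem_Collect_eq not_le)
qed

lemma rep:
  "\<exists>p r M. r \<noteq> 0 \<and> (\<forall>q. M < \<bar>q\<bar> \<longrightarrow> poly r q \<noteq> 0 \<and> eval_Q0 t q = poly p q / poly r q)"
proof (induction t)
  case Var
  show ?case by (rule exI[of _ "[:0,1:]"], rule exI[of _ 1], rule exI[of _ 0]) simp
next
  case Zero
  show ?case by (rule exI[of _ 0], rule exI[of _ 1], rule exI[of _ 0]) simp
next
  case One
  show ?case by (rule exI[of _ 1], rule exI[of _ 1], rule exI[of _ 0]) simp
next
  case (Plus s t)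
  then obtain p1 r1 M1 p2 r2 M2 where
    a: "r1 \<noteq> 0" "\<forall>q. M1 < \<bar>q\<bar> \<longrightarrow> poly r1 q \<noteq> 0 \<and> eval_Q0 s q = poly p1 q / poly r1 q" and
    b: "r2 \<noteq> 0" "\<forall>q. M2 < \<bar>q\<bar> \<longrightarrow> poly r2 q \<noteq> 0 \<and> eval_Q0 t q = poly p2 q / poly r2 q"
    by blast
  show ?case
    apply (rule exI[of _ "p1*r2+p2*r1"], rule exI[of _ "r1*r2"], rule exI[of _ "max M1 M2"])
    using a b by (auto simp: field_simps)
next
  case (Times s t)
  then obtain p1 r1 M1 p2 r2 M2 where
    a: "r1 \<noteq> 0" "\<forall>q. M1 < \<bar>q\<bar> \<longrightarrow> poly r1 q \<noteq> 0 \<and> eval_Q0 s q = poly p1 q / poly r1 q" and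
    b: "r2 \<noteq> 0" "\<forall>q. M2 < \<bar>q\<bar> \<longrightarrow> poly r2 q \<noteq> 0 \<and> eval_Q0 t q = poly p2 q / poly r2 q"
    by blast
  show ?case
    apply (rule exI[of _ "p1*p2"], rule exI[of _ "r1*r2"], rule exI[of _ "max M1 M2"])
    using a b by (auto simp: field_simps)
next
  case (Neg t)
  then obtain p1 r1 M1 where
    a: "r1 \<noteq> 0" "\<forall>q. M1 < \<bar>q\<bar> \<longrightarrow> poly r1 q \<noteq> 0 \<and> eval_Q0 t q = poly p1 q / poly r1 q"
    by blast
  show ?case
    apply (rule exI[of _ "-p1"], rule exI[of _ "r1"], rule exI[of _ "M1"])
    using a by auto
next
  case (Inv t)
  then obtain p1 r1 M1 where
    a: "r1 \<noteq> 0" "\<forall>q. M1 < \<bar>q\<bar> \<longrightarrow> poly r1 q \<noteq> 0 \<and> eval_Q0 t q = poly p1 q / poly r1 q"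
    by blast
  show ?case
  proof (cases "p1 = 0")
    case True
    show ?thesis
      apply (rule exI[of _ 0], rule exI[of _ 1], rule exI[of _ "M1"])
      using a True by auto
  next
    case False
    then obtain M0 where m: "\<forall>q. M0 < \<bar>q\<bar> \<longrightarrow> poly p1 q \<noteq> 0"
      using roots_bounded by blast
    show ?thesis
      apply (rule exI[of _ r1], rule exI[of _ p1], rule exI[of _ "max M0 M1"])
      using a m False by auto
  qed
qed

lemma poly_eq_inf:
  fixes p r :: "rat poly"
  assumes "\<forall>q. a < q \<longrightarrow> poly p q = poly r q"
  shows "p = r"
proof (rule ccontr)
  assume "p \<noteq> r"
  hence "p - r \<noteq> 0" by simp
  hence "finite {x. poly (p - r) x = 0}" by (rule poly_roots_finite)
  moreover have "{a<..} \<subseteq> {x. poly (p - r) x = 0}" using assms by auto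
  ultimately show False using infinite_Ioi finite_subset by blast
qed

lemma poly_eq_inf2:
  fixes p r :: "rat poly"
  assumes "\<forall>q. q < a \<longrightarrow> poly p q = poly r q"
  shows "p = r"
proof (rule ccontr)
  assume "p \<noteq> r"
  hence "p - r \<noteq> 0" by simp
  hence "finite {x. poly (p - r) x = 0}" by (rule poly_roots_finite)
  moreover have "{..<a} \<subseteq> {x. poly (p - r) x = 0}" using assms by auto
  ultimately show False using infinite_Iio finite_subset by blast
qed

theorem corollary3:
  shows "\<not> (\<exists>t::tm. \<forall>q::rat. eval_Q0 t q = sgn q)"
proof
  assume "\<exists>t::tm. \<forall>q::rat. eval_Q0 t q = sgn q"
  then obtain t where t: "\<forall>q::rat. eval_Q0 t q = sgn q" by blast
  obtain p r M where h: "r \<noteq> 0"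
    "\<forall>q. M < \<bar>q\<bar> \<longrightarrow> poly r q \<noteq> 0 \<and> eval_Q0 t q = poly p q / poly r q"
    using rep by blast
  have "\<forall>q. max M 0 < q \<longrightarrow> poly p q = poly r q"
  proof (intro allI impI)
    fix q :: rat assume q: "max M 0 < q"
    hence "M < \<bar>q\<bar>" by auto
    hence "poly r q \<noteq> 0" "sgn q = poly p q / poly r q" using h(2) t by auto
    moreover have "sgn q = 1" using q by simp
    ultimately show "poly p q = poly r q" by (simp add: field_simps)
  qed
  hence 1: "p = r" by (rule poly_eq_inf)
  have "\<forall>q. q < - max M 0 \<longrightarrow> poly p q = poly (-r) q"
  proof (intro allI impI)
    fix q :: rat assume q: "q < - max M 0"
    hence "M < \<bar>q\<bar>" by auto
    hence "poly r q \<noteq> 0" "sgn q = poly p q / poly r q" using h(2) t by auto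
    moreover have "sgn q = -1" using q by simp
    ultimately show "poly p q = poly (-r) q" by (simp add: field_simps)
  qed
  hence "p = -r" by (rule poly_eq_inf2)
  with 1 have "r = - r" by simp
  hence "r = 0" by (metis add.inverse_unique add_cancel_right_left neg_equal_zero)
  with h(1) show False by simp
qed

end
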